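(* Let $\mathcal R$ be a finite set of NME rules and $C$ a local chase criterion. If $\mathrm{pos}(\mathcal R)$ is $C$-finite, then $\mathcal R$ is $C$-stable-finite.
   Context: NME rule: $R=(B^+,\mathbf{not}\,B^-_1,\dots,\mathbf{not}\,B^-_k\to H)$, atomsets with $\mathrm{vars}(B^-_i)\subseteq\mathrm{vars}(B^+)$; $\mathrm{pos}(R)=B^+\to H$, $\mathrm{pos}(\mathcal R)=\{\mathrm{pos}(R)\}$. A $C$-chase applies rules breadth-first, $F_i=\alpha(\sigma_{i-1}(F_{i-1}),R,\pi)$ with $\alpha(F,R,\pi)=F\cup\pi(\mathrm{safe}(H))$, $\sigma_i$ an endomorphism chosen by criterion $C$. $C$ is local if $\sigma_i(F_i)\subseteq\sigma_j(F_j)$ for all $i\le j$ (oblivious, skolem, frontier, restricted chases are local; the core chase is not). A set of existential rules is $C$-finite if the $C$-chase halts (yields a finite complete derivation) on every atomset $F$. $C$-derivation tree of $(F,\mathcal R)$: nodes labelled $(\mathrm{IN},\mathrm{OUT},\mathrm{MBT})$ (inferred atomset, set of forbidden atomsets, atomsets that must be proven); root $(\sigma_0(F),\emptyset,\emptyset)$. A node is unsound if some atomset of OUT is included in IN or in MBT. For a childless non-unsound node $N$ and a rule $R$ with homomorphism $\pi:B^+\to\mathrm{IN}(N)$, if the application is not blocked and the $C$-chase step along the positive nodes from the root, $S=\sigma(\alpha(\mathrm{IN}(N),\mathrm{pos}(R),\pi))$, is not included in $\mathrm{IN}(N)$, add children $N^+$ labelled $(S,\mathrm{OUT}\cup\{\pi(B^-_1),\dots,\pi(B^-_k)\},\mathrm{MBT})$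 and $N^-_i$ labelled $(\mathrm{IN},\mathrm{OUT},\mathrm{MBT}\cup\{\pi(B^-_i)\})$. A branch is unsound if it contains an unsound node; a sound branch is complete if its associated derivation is complete (no further non-blocked application changes the result); a sound complete branch is stable if every atomset in MBT of a node later appears in IN of a descendant; a branch is unprovable if some node has an atomset in MBT such that no complete branch through that node is stable. A $C$-chase tree is a $C$-derivation tree all of whose branches are unsound, unprovable or complete. $\mathcal R$ is $C$-stable-finite if for every atomset $F$ there is a finite $C$-chase tree of $(F,\mathcal R)$. *)

theory Defs
  imports Main "HOL-Library.Infinite_Typeclass"
begin

datatype ('c, 'v) trm = Var 'v | Cst 'c

type_synonym ('p, 'c, 'v) atom = "'p \<times> ('c, 'v) trm list"
type_synonym ('p, 'c, 'v) atomset = "('p, 'c, 'v) atom set"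
type_synonym ('c, 'v) subst = "'v \<Rightarrow> ('c, 'v) trm"

fun tvars :: "('c, 'v) trm \<Rightarrow> 'v set" where
  "tvars (Var x) = {x}"
| "tvars (Cst c) = {}"

definition avars :: "('p, 'c, 'v) atom \<Rightarrow> 'v set" where
  "avars a = \<Union> (tvars ` set (snd a))"

definition vars :: "('p, 'c, 'v) atomset \<Rightarrow> 'v set" where
  "vars A = \<Union> (avars ` A)"

fun tsubst :: "('c, 'v) subst \<Rightarrow> ('c, 'v) trm \<Rightarrow> ('c, 'v) trm" where
  "tsubst s (Var x) = s x"
| "tsubst s (Cst c) = Cst c"

definition asubst :: "('c, 'v) subst \<Rightarrow> ('p, 'c, 'v) atom \<Rightarrow> ('p, 'c, 'v) atom" where
  "asubst s a = (fst a, map (tsubst s) (snd a))"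

definition sapply :: "('c, 'v) subst \<Rightarrow> ('p, 'c, 'v) atomset \<Rightarrow> ('p, 'c, 'v) atomset" where
  "sapply s A = asubst s ` A"

text \<open>Homomorphisms from A to B, represented canonically as substitutions that are
  the identity outside vars(A) (i.e. maps vars(A) -> terms).\<close>
definition homs :: "('p, 'c, 'v) atomset \<Rightarrow> ('p, 'c, 'v) atomset \<Rightarrow> ('c, 'v) subst set" where
  "homs A B = {\<pi>. sapply \<pi> A \<subseteq> B \<and> (\<forall>x. x \<notin> vars A \<longrightarrow> \<pi> x = Var x)}"

record ('p, 'c, 'v) nme_rule =
  bpos :: "('p, 'c, 'v) atomset"
  bneg :: "('p, 'c, 'v) atomset list"
  head :: "('p, 'c, 'v) atomset"

definition nme_rule :: "('p, 'c, 'v) nme_rule \<Rightarrow> bool" where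
  "nme_rule R \<longleftrightarrow> finite (bpos R) \<and> finite (head R) \<and>
     (\<forall>B\<in>set (bneg R). finite B \<and> vars B \<subseteq> vars (bpos R))"

definition pos :: "('p, 'c, 'v) nme_rule \<Rightarrow> ('p, 'c, 'v) nme_rule" where
  "pos R = R\<lparr>bneg := []\<rparr>"

definition exist_rule :: "('p, 'c, 'v) nme_rule \<Rightarrow> bool" where
  "exist_rule R \<longleftrightarrow> nme_rule R \<and> bneg R = []"

definition exvars :: "('p, 'c, 'v) nme_rule \<Rightarrow> 'v set" where
  "exvars R = vars (head R) - vars (bpos R)"

text \<open>alpha(F,R,pi) = F \<union> pi(safe(H)): existential variables are renamed injectively
  into variables that are fresh for F (a fixed choice, via Hilbert choice).\<close>
definition alpha :: "('p, 'c, 'v) atomset \<Rightarrow> ('p, 'c, 'v) nme_rule \<Rightarrow> ('c, 'v) subst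
    \<Rightarrow> ('p, 'c, 'v) atomset" where
  "alpha F R \<pi> = F \<union> sapply (SOME \<pi>'. (\<forall>x\<in>vars (bpos R). \<pi>' x = \<pi> x) \<and> inj_on \<pi>' (exvars R) \<and>
       (\<forall>x\<in>exvars R. \<exists>y. \<pi>' x = Var y \<and> y \<notin> vars F)) (head R)"

type_synonym ('p, 'c, 'v) trigger = "('p, 'c, 'v) nme_rule \<times> ('c, 'v) subst"

text \<open>An (abstract) chase criterion C: given the initial atomset F and the list of
  triggers applied so far (chronological), it chooses the endomorphism sigma_i, and
  it decides whether the application of a further trigger is blocked.\<close>
record ('p, 'c, 'v) criterion =
  csig :: "('p, 'c, 'v) atomset \<Rightarrow> ('p, 'c, 'v) trigger list \<Rightarrow> ('c, 'v) subst"
  cblk :: "('p, 'c, 'v) atomset \<Rightarrow> ('p, 'c, 'v) trigger list \<Rightarrow> ('p, 'c, 'v) trigger \<Rightarrow> bool"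

text \<open>st C F (reversed trigger list) = sigma_i(F_i).\<close>
fun st :: "('p, 'c, 'v) criterion \<Rightarrow> ('p, 'c, 'v) atomset \<Rightarrow> ('p, 'c, 'v) trigger list
    \<Rightarrow> ('p, 'c, 'v) atomset" where
  "st C F [] = sapply (csig C F []) F"
| "st C F (t # rs) = sapply (csig C F (rev (t # rs))) (alpha (st C F rs) (fst t) (snd t))"

definition state :: "('p, 'c, 'v) criterion \<Rightarrow> ('p, 'c, 'v) atomset \<Rightarrow> ('p, 'c, 'v) trigger list
    \<Rightarrow> ('p, 'c, 'v) atomset" where
  "state C F ts = st C F (rev ts)"

text \<open>F_i (before applying sigma_i).\<close>
definition pre_state :: "('p, 'c, 'v) criterion \<Rightarrow> ('p, 'c, 'v) atomset \<Rightarrow> ('p, 'c, 'v) trigger list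
    \<Rightarrow> ('p, 'c, 'v) atomset" where
  "pre_state C F ts = (case rev ts of [] \<Rightarrow> F | t # rs \<Rightarrow> alpha (st C F rs) (fst t) (snd t))"

definition cder :: "('p, 'c, 'v) criterion \<Rightarrow> ('p, 'c, 'v) atomset \<Rightarrow> ('p, 'c, 'v) trigger list \<Rightarrow> bool" where
  "cder C F ts \<longleftrightarrow> (\<forall>i<length ts. exist_rule (fst (ts ! i)) \<and>
      snd (ts ! i) \<in> homs (bpos (fst (ts ! i))) (state C F (take i ts)) \<and>
      \<not> cblk C F (take i ts) (ts ! i))"

definition chase_criterion :: "('p, 'c, 'v) criterion \<Rightarrow> bool" where
  "chase_criterion C \<longleftrightarrow> (\<forall>F ts. finite F \<and> cder C F ts \<longrightarrow>
      sapply (csig C F ts) (pre_state C F ts) \<subseteq> pre_state C F ts)"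

definition local_crit :: "('p, 'c, 'v) criterion \<Rightarrow> bool" where
  "local_crit C \<longleftrightarrow> (\<forall>F ts i j. finite F \<and> cder C F ts \<and> i \<le> j \<and> j \<le> length ts \<longrightarrow>
      state C F (take i ts) \<subseteq> state C F (take j ts))"

definition cands :: "('p, 'c, 'v) nme_rule set \<Rightarrow> ('p, 'c, 'v) atomset \<Rightarrow> ('p, 'c, 'v) trigger set" where
  "cands S G = {(R, \<pi>) | R \<pi>. R \<in> S \<and> \<pi> \<in> homs (bpos R) G}"

text \<open>Processing one breadth-first round: the triggers on the atomset at the start of the
  round are considered in the given order; each is applied if it is not blocked and
  changes the current result.\<close>
fun proc :: "('p, 'c, 'v) criterion \<Rightarrow> ('p, 'c, 'v) atomset \<Rightarrow> ('p, 'c, 'v) trigger list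
    \<Rightarrow> ('p, 'c, 'v) trigger list \<Rightarrow> ('p, 'c, 'v) trigger list" where
  "proc C F h [] = h"
| "proc C F h (c # cs) = proc C F
     (if \<not> cblk C F h c \<and> \<not> state C F (h @ [c]) \<subseteq> state C F h then h @ [c] else h) cs"

definition chase_run :: "('p, 'c, 'v) criterion \<Rightarrow> ('p, 'c, 'v) nme_rule set \<Rightarrow> ('p, 'c, 'v) atomset
    \<Rightarrow> (nat \<Rightarrow> ('p, 'c, 'v) trigger list) \<Rightarrow> bool" where
  "chase_run C S F h \<longleftrightarrow> h 0 = [] \<and>
     (\<forall>k. \<exists>cs. distinct cs \<and> set cs = cands S (state C F (h k)) \<and> h (Suc k) = proc C F (h k) cs)"

definition chase_halts :: "('p, 'c, 'v) criterion \<Rightarrow> ('p, 'c, 'v) nme_rule set \<Rightarrow> ('p, 'c, 'v) atomset \<Rightarrow> bool" where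
  "chase_halts C S F \<longleftrightarrow> (\<forall>h. chase_run C S F h \<longrightarrow> (\<exists>k. h (Suc k) = h k))"

definition C_finite :: "('p, 'c, 'v) criterion \<Rightarrow> ('p, 'c, 'v) nme_rule set \<Rightarrow> bool" where
  "C_finite C S \<longleftrightarrow> (\<forall>F. finite F \<longrightarrow> chase_halts C S F)"

record ('p, 'c, 'v) nlab =
  IN   :: "('p, 'c, 'v) atomset"
  OUT  :: "('p, 'c, 'v) atomset set"
  MBT  :: "('p, 'c, 'v) atomset set"
  hist :: "('p, 'c, 'v) trigger list"   \<comment> \<open>triggers (pos R, pi) along positive edges from the root\<close>

text \<open>A node is a leaf, or an inner node expanded with rule R and homomorphism pi; its
  children are [N+, N-_1, ..., N-_k].\<close>
datatype ('p, 'c, 'v) dtree = Leaf | Inner "('p, 'c, 'v) nme_rule" "('c, 'v) subst" "('p, 'c, 'v) dtree list"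

definition root_lab :: "('p, 'c, 'v) criterion \<Rightarrow> ('p, 'c, 'v) atomset \<Rightarrow> ('p, 'c, 'v) nlab" where
  "root_lab C F = \<lparr>IN = state C F [], OUT = {}, MBT = {}, hist = []\<rparr>"

fun child_lab :: "('p, 'c, 'v) criterion \<Rightarrow> ('p, 'c, 'v) atomset \<Rightarrow> ('p, 'c, 'v) nlab
    \<Rightarrow> ('p, 'c, 'v) nme_rule \<Rightarrow> ('c, 'v) subst \<Rightarrow> nat \<Rightarrow> ('p, 'c, 'v) nlab" where
  "child_lab C F l R \<pi> 0 =
     \<lparr>IN = state C F (hist l @ [(pos R, \<pi>)]),
      OUT = OUT l \<union> set (map (sapply \<pi>) (bneg R)),
      MBT = MBT l,
      hist = hist l @ [(pos R, \<pi>)]\<rparr>"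
| "child_lab C F l R \<pi> (Suc i) = l\<lparr>MBT := MBT l \<union> {sapply \<pi> (bneg R ! i)}\<rparr>"

primrec subt :: "('p, 'c, 'v) dtree \<Rightarrow> nat list \<Rightarrow> ('p, 'c, 'v) dtree option" where
  "subt t [] = Some t"
| "subt t (i # a) = (case t of Leaf \<Rightarrow> None
     | Inner R \<pi> cs \<Rightarrow> if i < length cs then subt (cs ! i) a else None)"

primrec labs :: "('p, 'c, 'v) criterion \<Rightarrow> ('p, 'c, 'v) atomset \<Rightarrow> ('p, 'c, 'v) nlab
    \<Rightarrow> ('p, 'c, 'v) dtree \<Rightarrow> nat list \<Rightarrow> ('p, 'c, 'v) nlab list" where
  "labs C F l t [] = [l]"
| "labs C F l t (i # a) = l # (case t of Leaf \<Rightarrow> []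
     | Inner R \<pi> cs \<Rightarrow> labs C F (child_lab C F l R \<pi> i) (cs ! i) a)"

definition lab_at :: "('p, 'c, 'v) criterion \<Rightarrow> ('p, 'c, 'v) atomset \<Rightarrow> ('p, 'c, 'v) dtree
    \<Rightarrow> nat list \<Rightarrow> ('p, 'c, 'v) nlab" where
  "lab_at C F t a = last (labs C F (root_lab C F) t a)"

definition leaves :: "('p, 'c, 'v) dtree \<Rightarrow> nat list set" where
  "leaves t = {a. subt t a = Some Leaf}"

definition unsound :: "('p, 'c, 'v) nlab \<Rightarrow> bool" where
  "unsound l \<longleftrightarrow> (\<exists>B\<in>OUT l. B \<subseteq> IN l \<or> (\<exists>m\<in>MBT l. B \<subseteq> m))"

definition wf_dtree :: "('p, 'c, 'v) criterion \<Rightarrow> ('p, 'c, 'v) nme_rule set \<Rightarrow> ('p, 'c, 'v) atomset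
    \<Rightarrow> ('p, 'c, 'v) dtree \<Rightarrow> bool" where
  "wf_dtree C Rs F t \<longleftrightarrow> (\<forall>a R \<pi> cs. subt t a = Some (Inner R \<pi> cs) \<longrightarrow>
     (let l = lab_at C F t a in
        R \<in> Rs \<and> \<pi> \<in> homs (bpos R) (IN l) \<and> \<not> unsound l \<and>
        \<not> cblk C F (hist l) (pos R, \<pi>) \<and>
        \<not> state C F (hist l @ [(pos R, \<pi>)]) \<subseteq> IN l \<and>
        length cs = Suc (length (bneg R))))"

definition unsound_br :: "('p, 'c, 'v) criterion \<Rightarrow> ('p, 'c, 'v) atomset \<Rightarrow> ('p, 'c, 'v) dtree
    \<Rightarrow> nat list \<Rightarrow> bool" where
  "unsound_br C F t a \<longleftrightarrow> (\<exists>j\<le>length a. unsound (lab_at C F t (take j a)))"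

definition complete_der :: "('p, 'c, 'v) criterion \<Rightarrow> ('p, 'c, 'v) nme_rule set \<Rightarrow> ('p, 'c, 'v) atomset
    \<Rightarrow> ('p, 'c, 'v) trigger list \<Rightarrow> bool" where
  "complete_der C Rs F ts \<longleftrightarrow> (\<forall>R\<in>Rs. \<forall>\<pi>\<in>homs (bpos R) (state C F ts).
     \<not> cblk C F ts (pos R, \<pi>) \<longrightarrow> state C F (ts @ [(pos R, \<pi>)]) \<subseteq> state C F ts)"

definition complete_br :: "('p, 'c, 'v) criterion \<Rightarrow> ('p, 'c, 'v) nme_rule set \<Rightarrow> ('p, 'c, 'v) atomset
    \<Rightarrow> ('p, 'c, 'v) dtree \<Rightarrow> nat list \<Rightarrow> bool" where
  "complete_br C Rs F t a \<longleftrightarrow> \<not> unsound_br C F t a \<and> complete_der C Rs F (hist (lab_at C F t a))"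

definition stable_br :: "('p, 'c, 'v) criterion \<Rightarrow> ('p, 'c, 'v) nme_rule set \<Rightarrow> ('p, 'c, 'v) atomset
    \<Rightarrow> ('p, 'c, 'v) dtree \<Rightarrow> nat list \<Rightarrow> bool" where
  "stable_br C Rs F t a \<longleftrightarrow> complete_br C Rs F t a \<and>
     (\<forall>j\<le>length a. \<forall>m\<in>MBT (lab_at C F t (take j a)).
        \<exists>j'. j \<le> j' \<and> j' \<le> length a \<and> m \<subseteq> IN (lab_at C F t (take j' a)))"

definition unprovable_br :: "('p, 'c, 'v) criterion \<Rightarrow> ('p, 'c, 'v) nme_rule set \<Rightarrow> ('p, 'c, 'v) atomset
    \<Rightarrow> ('p, 'c, 'v) dtree \<Rightarrow> nat list \<Rightarrow> bool" where
  "unprovable_br C Rs F t a \<longleftrightarrow> (\<exists>j\<le>length a. \<exists>m\<in>MBT (lab_at C F t (take j a)).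
     \<not> (\<exists>b\<in>leaves t. j \<le> length b \<and> take j b = take j a \<and>
           complete_br C Rs F t b \<and> stable_br C Rs F t b))"

definition chase_tree :: "('p, 'c, 'v) criterion \<Rightarrow> ('p, 'c, 'v) nme_rule set \<Rightarrow> ('p, 'c, 'v) atomset
    \<Rightarrow> ('p, 'c, 'v) dtree \<Rightarrow> bool" where
  "chase_tree C Rs F t \<longleftrightarrow> wf_dtree C Rs F t \<and>
     (\<forall>a\<in>leaves t. unsound_br C F t a \<or> unprovable_br C Rs F t a \<or> complete_br C Rs F t a)"

text \<open>Trees of the inductive datatype dtree are finite.\<close>
definition C_stable_finite :: "('p, 'c, 'v) criterion \<Rightarrow> ('p, 'c, 'v) nme_rule set \<Rightarrow> bool" where
  "C_stable_finite C Rs \<longleftrightarrow> (\<forall>F. finite F \<longrightarrow> (\<exists>t. chase_tree C Rs F t))"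

end

theory Submission
  imports Defs "HOL-Library.FuncSet"
begin

definition validl :: "('p, 'c, 'v) criterion \<Rightarrow> ('p, 'c, 'v) nme_rule set \<Rightarrow> ('p, 'c, 'v) atomset
    \<Rightarrow> ('p, 'c, 'v) trigger list \<Rightarrow> bool" where
  "validl C S F ts \<longleftrightarrow> (\<forall>i<length ts. fst (ts!i) \<in> S \<and>
      snd (ts!i) \<in> homs (bpos (fst (ts!i))) (state C F (take i ts)) \<and>
      \<not> cblk C F (take i ts) (ts!i) \<and> \<not> state C F (take (Suc i) ts) \<subseteq> state C F (take i ts))"

lemma validl_Nil: "validl C S F []"
  by (simp add: validl_def)

lemma validl_snoc:
  "validl C S F (ts@[c]) \<longleftrightarrow> validl C S F ts \<and> fst c \<in> S \<and>
     snd c \<in> homs (bpos (fst c)) (state C F ts) \<and> \<not> cblk C F ts c \<and>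
     \<not> state C F (ts@[c]) \<subseteq> state C F ts"
proof
  assume a: "validl C S F (ts@[c])"
  have "validl C S F ts"
    unfolding validl_def
  proof (intro allI impI)
    fix i assume i: "i < length ts"
    then show "fst (ts!i) \<in> S \<and>
      snd (ts!i) \<in> homs (bpos (fst (ts!i))) (state C F (take i ts)) \<and>
      \<not> cblk C F (take i ts) (ts!i) \<and> \<not> state C F (take (Suc i) ts) \<subseteq> state C F (take i ts)"
      using a[unfolded validl_def, rule_format, of i] by (simp add: nth_append)
  qed
  moreover have "fst c \<in> S \<and>
     snd c \<in> homs (bpos (fst c)) (state C F ts) \<and> \<not> cblk C F ts c \<and>
     \<not> state C F (ts@[c]) \<subseteq> state C F ts"
    using a[unfolded validl_def, rule_format, of "length ts"] by simp
  ultimately show "validl C S F ts \<and> fst c \<in> S \<and>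
     snd c \<in> homs (bpos (fst c)) (state C F ts) \<and> \<not> cblk C F ts c \<and>
     \<not> state C F (ts@[c]) \<subseteq> state C F ts" by blast
next
  assume a: "validl C S F ts \<and> fst c \<in> S \<and>
     snd c \<in> homs (bpos (fst c)) (state C F ts) \<and> \<not> cblk C F ts c \<and>
     \<not> state C F (ts@[c]) \<subseteq> state C F ts"
  show "validl C S F (ts@[c])"
    unfolding validl_def
  proof (intro allI impI)
    fix i assume i: "i < length (ts@[c])"
    show "fst ((ts@[c])!i) \<in> S \<and>
      snd ((ts@[c])!i) \<in> homs (bpos (fst ((ts@[c])!i))) (state C F (take i (ts@[c]))) \<and>
      \<not> cblk C F (take i (ts@[c])) ((ts@[c])!i) \<and>
      \<not> state C F (take (Suc i) (ts@[c])) \<subseteq> state C F (take i (ts@[c]))"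
    proof (cases "i < length ts")
      case True
      then show ?thesis using a[THEN conjunct1, unfolded validl_def, rule_format, of i]
        by (simp add: nth_append)
    next
      case False
      then have "i = length ts" using i by simp
      then show ?thesis using a by simp
    qed
  qed
qed

lemma pos_simps[simp]: "bpos (pos R) = bpos R" "head (pos R) = head R" "bneg (pos R) = []"
  by (simp_all add: pos_def)

lemma validl_cder:
  assumes "validl C (pos ` Rs) F ts" "\<forall>R\<in>Rs. nme_rule R"
  shows "cder C F ts"
  unfolding cder_def
proof (intro allI impI)
  fix i assume i: "i < length ts"
  from assms(1)[unfolded validl_def, rule_format, OF i] obtain R where
    R: "R \<in> Rs" "fst (ts!i) = pos R" by auto
  have "exist_rule (pos R)" using assms(2) R(1)
    by (simp add: exist_rule_def nme_rule_def vars_def)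
  then show "exist_rule (fst (ts ! i)) \<and>
      snd (ts ! i) \<in> homs (bpos (fst (ts ! i))) (state C F (take i ts)) \<and>
      \<not> cblk C F (take i ts) (ts ! i)"
    using assms(1)[unfolded validl_def, rule_format, OF i] R by simp
qed

lemma homs_mono: "B \<subseteq> B' \<Longrightarrow> homs A B \<subseteq> homs A B'"
  unfolding homs_def by auto

lemma finite_tvars: "finite (tvars t)"
  by (cases t) auto

lemma finite_avars: "finite (avars a)"
  unfolding avars_def by (simp add: finite_tvars)

lemma finite_vars: "finite A \<Longrightarrow> finite (vars A)"
  unfolding vars_def by (simp add: finite_avars)

lemma finite_homs:
  assumes "finite A" "finite B"
  shows "finite (homs A B)"
proof -
  define T where "T = (\<Union>b\<in>B. set (snd b))"
  have fT: "finite T" using assms(2) unfolding T_def by auto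
  have fV: "finite (vars A)" using assms(1) by (rule finite_vars)
  have img: "(\<lambda>\<pi>. restrict \<pi> (vars A)) ` homs A B \<subseteq> PiE (vars A) (\<lambda>_. T)"
  proof
    fix f assume "f \<in> (\<lambda>\<pi>. restrict \<pi> (vars A)) ` homs A B"
    then obtain \<pi> where p: "\<pi> \<in> homs A B" and f: "f = restrict \<pi> (vars A)" by auto
    have "\<pi> x \<in> T" if x: "x \<in> vars A" for x
    proof -
      from x obtain a where a: "a \<in> A" "x \<in> avars a" unfolding vars_def by auto
      then obtain t where t: "t \<in> set (snd a)" "x \<in> tvars t" unfolding avars_def by auto
      have tv: "t = Var x" using t(2) by (cases t) auto
      have "asubst \<pi> a \<in> B" using p a(1) unfolding homs_def sapply_def by auto
      moreover have "\<pi> x \<in> set (snd (asubst \<pi> a))"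
        using t tv unfolding asubst_def by force
      ultimately show ?thesis unfolding T_def by auto
    qed
    then show "f \<in> PiE (vars A) (\<lambda>_. T)" unfolding f by (auto simp: PiE_def extensional_def)
  qed
  have inj: "inj_on (\<lambda>\<pi>. restrict \<pi> (vars A)) (homs A B)"
  proof (rule inj_onI)
    fix \<pi> \<rho> assume p: "\<pi> \<in> homs A B" "\<rho> \<in> homs A B"
      and e: "restrict \<pi> (vars A) = restrict \<rho> (vars A)"
    show "\<pi> = \<rho>"
    proof
      fix x show "\<pi> x = \<rho> x"
      proof (cases "x \<in> vars A")
        case True then show ?thesis using fun_cong[OF e, of x] by simp
      next
        case False then show ?thesis using p unfolding homs_def by auto
      qed
    qed
  qed
  have "finite ((\<lambda>\<pi>. restrict \<pi> (vars A)) ` homs A B)"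
    using img finite_PiE[OF fV, of "\<lambda>_. T"] fT finite_subset by blast
  then show ?thesis using finite_imageD inj by blast
qed

lemma finite_st: "finite F \<Longrightarrow> \<forall>c\<in>set ts. finite (head (fst c)) \<Longrightarrow> finite (st C F ts)"
proof (induction ts)
  case Nil then show ?case by (simp add: sapply_def)
next
  case (Cons t ts) then show ?case by (cases t) (simp add: sapply_def alpha_def)
qed

lemma state_finite:
  assumes "validl C (pos ` Rs) F ts" "\<forall>R\<in>Rs. nme_rule R" "finite F"
  shows "finite (state C F ts)"
proof -
  have "\<forall>c\<in>set (rev ts). finite (head (fst c))"
  proof
    fix c assume "c \<in> set (rev ts)"
    then obtain i where i: "i < length ts" "c = ts ! i" by (auto simp: in_set_conv_nth)
    then obtain R where "R \<in> Rs" "fst c = pos R"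
      using assms(1)[unfolded validl_def, rule_format, OF i(1)] by auto
    then show "finite (head (fst c))" using assms(2) by (simp add: nme_rule_def)
  qed
  then show ?thesis unfolding state_def using finite_st assms(3) by blast
qed

lemma proc_prefix: "\<exists>w. proc C F h cs = h @ w"
proof (induction cs arbitrary: h)
  case Nil then show ?case by simp
next
  case (Cons c cs)
  then show ?case by simp (metis append.assoc)
qed

lemma proc_fixed: "proc C F h cs = h \<Longrightarrow> c \<in> set cs \<Longrightarrow> cblk C F h c \<or> state C F (h@[c]) \<subseteq> state C F h"
proof (induction cs arbitrary: h)
  case Nil then show ?case by simp
next
  case (Cons d cs)
  show ?case
  proof (cases "\<not> cblk C F h d \<and> \<not> state C F (h @ [d]) \<subseteq> state C F h")
    case True
    then have "proc C F (h@[d]) cs = h" using Cons.prems(1) by simp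
    moreover obtain w where "proc C F (h@[d]) cs = (h@[d]) @ w" using proc_prefix by blast
    ultimately have False by (metis append.assoc append_self_conv append_Cons list.distinct(1))
    then show ?thesis ..
  next
    case False
    note nc = this
    have p: "proc C F h cs = h" using Cons.prems(1) by (simp only: if_not_P[OF nc] proc.simps)
    show ?thesis
    proof (cases "c = d")
      case True then show ?thesis using nc by blast
    next
      case False then show ?thesis using Cons.IH[OF p] Cons.prems(2) by simp
    qed
  qed
qed

lemma proc_valid:
  assumes "local_crit C" "finite F" "\<forall>R\<in>Rs. nme_rule R"
  shows "validl C (pos ` Rs) F h \<Longrightarrow> set cs \<subseteq> cands (pos ` Rs) (state C F h0) \<Longrightarrow>
    (\<exists>w. h = h0 @ w) \<Longrightarrow> validl C (pos ` Rs) F (proc C F h cs)"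
proof (induction cs arbitrary: h)
  case Nil then show ?case by simp
next
  case (Cons c cs)
  let ?h' = "if \<not> cblk C F h c \<and> \<not> state C F (h @ [c]) \<subseteq> state C F h then h @ [c] else h"
  have v: "validl C (pos ` Rs) F ?h'"
  proof (cases "\<not> cblk C F h c \<and> \<not> state C F (h @ [c]) \<subseteq> state C F h")
    case True
    from Cons.prems(2) have c: "fst c \<in> pos ` Rs" "snd c \<in> homs (bpos (fst c)) (state C F h0)"
      unfolding cands_def by auto
    obtain w where w: "h = h0 @ w" using Cons.prems(3) by blast
    have cd: "cder C F h" using validl_cder Cons.prems(1) assms(3) by blast
    have "state C F (take (length h0) h) \<subseteq> state C F (take (length h) h)"
      using assms(1)[unfolded local_crit_def, rule_format, of F h "length h0" "length h"] assms(2) cd w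
      by simp
    then have "state C F h0 \<subseteq> state C F h" using w by simp
    then have "snd c \<in> homs (bpos (fst c)) (state C F h)" using c(2) homs_mono by blast
    then show ?thesis using True c(1) Cons.prems(1) validl_snoc by (simp add: validl_snoc)
  next
    case False
    note nc = this
    then show ?thesis using Cons.prems(1) by (simp only: if_not_P[OF nc] if_False)
  qed
  have "\<exists>w. ?h' = h0 @ w" using Cons.prems(3) by auto
  then show ?case using Cons.IH[OF v _] Cons.prems(2) by simp
qed

lemma finite_cands:
  assumes "finite S" "\<forall>R\<in>S. finite (bpos R)" "finite G"
  shows "finite (cands S G)"
proof -
  have "cands S G = (\<Union>R\<in>S. Pair R ` homs (bpos R) G)" unfolding cands_def by auto
  then show ?thesis using assms by (auto intro!: finite_homs)
qed

primrec hrun :: "('p, 'c, 'v) criterion \<Rightarrow> ('p, 'c, 'v) nme_rule set \<Rightarrow> ('p, 'c, 'v) atomset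
   \<Rightarrow> nat \<Rightarrow> ('p, 'c, 'v) trigger list" where
  "hrun C S F 0 = []"
| "hrun C S F (Suc k) = proc C F (hrun C S F k)
      (SOME cs. distinct cs \<and> set cs = cands S (state C F (hrun C S F k)))"

lemma hrun_valid:
  assumes "local_crit C" "finite F" "\<forall>R\<in>Rs. nme_rule R" "finite Rs"
  shows "validl C (pos ` Rs) F (hrun C (pos ` Rs) F k) \<and>
    distinct (SOME cs. distinct cs \<and> set cs = cands (pos ` Rs) (state C F (hrun C (pos ` Rs) F k))) \<and>
    set (SOME cs. distinct cs \<and> set cs = cands (pos ` Rs) (state C F (hrun C (pos ` Rs) F k))) =
      cands (pos ` Rs) (state C F (hrun C (pos ` Rs) F k))"
proof (induction k)
  have *: "validl C (pos ` Rs) F h \<Longrightarrow>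
    distinct (SOME cs. distinct cs \<and> set cs = cands (pos ` Rs) (state C F h)) \<and>
    set (SOME cs. distinct cs \<and> set cs = cands (pos ` Rs) (state C F h)) =
      cands (pos ` Rs) (state C F h)" for h
  proof -
    assume v: "validl C (pos ` Rs) F h"
    have "finite (cands (pos ` Rs) (state C F h))"
      apply (rule finite_cands)
      using assms(4) apply simp
      using assms(3) apply (simp add: nme_rule_def)
      using state_finite[OF v assms(3) assms(2)] .
    then have "\<exists>cs. distinct cs \<and> set cs = cands (pos ` Rs) (state C F h)"
      using finite_distinct_list by metis
    then show ?thesis by (rule someI_ex)
  qed
  {
    case 0 show ?case using *[of "[]"] by (simp add: validl_Nil)
  next
    case (Suc k)
    have "validl C (pos ` Rs) F (hrun C (pos ` Rs) F (Suc k))"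
      using proc_valid[OF assms(1-3), of "hrun C (pos ` Rs) F k" _ "hrun C (pos ` Rs) F k"] Suc
      by simp
    then show ?case using * by blast
  }
qed

fun mk :: "(('p, 'c, 'v) nme_rule \<times> ('c, 'v) subst) list \<Rightarrow> ('p, 'c, 'v) dtree" where
  "mk [] = Leaf"
| "mk ((R, \<pi>) # xs) = Inner R \<pi> (mk xs # replicate (length (bneg R)) Leaf)"

definition chl :: "('p, 'c, 'v) criterion \<Rightarrow> ('p, 'c, 'v) atomset \<Rightarrow> ('p, 'c, 'v) nlab
    \<Rightarrow> (('p, 'c, 'v) nme_rule \<times> ('c, 'v) subst) list \<Rightarrow> ('p, 'c, 'v) nlab" where
  "chl C F l ys = foldl (\<lambda>l (R, \<pi>). child_lab C F l R \<pi> 0) l ys"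

definition pt :: "('p, 'c, 'v) nme_rule \<times> ('c, 'v) subst \<Rightarrow> ('p, 'c, 'v) trigger" where
  "pt x = (pos (fst x), snd x)"

lemma labs_ne: "labs C F l t a \<noteq> []"
  by (cases a) auto

lemma chl_Nil[simp]: "chl C F l [] = l"
  by (simp add: chl_def)

lemma chl_Cons[simp]: "chl C F l ((R, \<pi>) # ys) = chl C F (child_lab C F l R \<pi> 0) ys"
  by (simp add: chl_def)

lemma chl_props:
  "hist (chl C F l ys) = hist l @ map pt ys \<and> MBT (chl C F l ys) = MBT l \<and>
   (ys \<noteq> [] \<longrightarrow> IN (chl C F l ys) = state C F (hist l @ map pt ys))"
proof (induction ys arbitrary: l)
  case Nil then show ?case by simp
next
  case (Cons y ys)
  obtain R \<pi> where y: "y = (R, \<pi>)" by (cases y)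
  show ?case using Cons.IH[of "child_lab C F l R \<pi> 0"] y
    by (cases "ys = []") (auto simp: pt_def)
qed

lemma mk_chain: "d \<le> length xs \<Longrightarrow>
   last (labs C F l (mk xs) (replicate d 0)) = chl C F l (take d xs)"
proof (induction xs arbitrary: l d rule: mk.induct)
  case 1 then show ?case by simp
next
  case (2 R \<pi> xs)
  show ?case
  proof (cases d)
    case 0 then show ?thesis by simp
  next
    case (Suc d')
    then show ?thesis using 2 by (simp add: labs_ne)
  qed
qed

lemma mk_neg: "d < length xs \<Longrightarrow> i < length (bneg (fst (xs ! d))) \<Longrightarrow>
   last (labs C F l (mk xs) (replicate d 0 @ [Suc i])) =
     child_lab C F (chl C F l (take d xs)) (fst (xs ! d)) (snd (xs ! d)) (Suc i)"
proof (induction xs arbitrary: l d rule: mk.induct)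
  case 1 then show ?case by simp
next
  case (2 R \<pi> xs)
  show ?case
  proof (cases d)
    case 0 then show ?thesis using 2 by simp
  next
    case (Suc d')
    then show ?thesis using 2 by (simp add: labs_ne)
  qed
qed

lemma subt_Leaf: "subt Leaf a = Some s \<Longrightarrow> a = [] \<and> s = Leaf"
  by (cases a) auto

lemma mk_subt: "subt (mk xs) a = Some s \<Longrightarrow>
  (\<exists>d\<le>length xs. a = replicate d 0 \<and> s = mk (drop d xs)) \<or>
  (\<exists>d<length xs. \<exists>i<length (bneg (fst (xs!d))). a = replicate d 0 @ [Suc i] \<and> s = Leaf)"
proof (induction xs arbitrary: a rule: mk.induct)
  case 1 then show ?case using subt_Leaf by fastforce
next
  case (2 R \<pi> xs)
  show ?case
  proof (cases a)
    case Nil then show ?thesis using 2 by (intro disjI1 exI[of _ 0]) auto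
  next
    case (Cons i a')
    show ?thesis
    proof (cases i)
      case 0
      then have "subt (mk xs) a' = Some s" using 2(2) Cons by simp
      from 2(1)[OF this] show ?thesis
      proof
        assume "\<exists>d\<le>length xs. a' = replicate d 0 \<and> s = mk (drop d xs)"
        then obtain d where "d \<le> length xs" "a' = replicate d 0" "s = mk (drop d xs)" by blast
        then show ?thesis using Cons 0 by (intro disjI1 exI[of _ "Suc d"]) auto
      next
        assume "\<exists>d<length xs. \<exists>i<length (bneg (fst (xs!d))). a' = replicate d 0 @ [Suc i] \<and> s = Leaf"
        then obtain d j where "d < length xs" "j < length (bneg (fst (xs!d)))"
          "a' = replicate d 0 @ [Suc j]" "s = Leaf" by blast
        then show ?thesis using Cons 0 by (intro disjI2 exI[of _ "Suc d"]) auto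
      qed
    next
      case (Suc j)
      then have j: "j < length (bneg R)" "subt Leaf a' = Some s" using 2(2) Cons
        by (auto split: if_splits)
      then have "a' = [] \<and> s = Leaf" using subt_Leaf by blast
      then show ?thesis using Cons Suc j by (intro disjI2 exI[of _ 0]) auto
    qed
  qed
qed

lemma subt_append: "subt t (a @ b) = (case subt t a of None \<Rightarrow> None | Some s \<Rightarrow> subt s b)"
proof (induction a arbitrary: t)
  case Nil then show ?case by simp
next
  case (Cons i a) then show ?case by (cases t) auto
qed

lemma tree_exists:
  assumes v: "validl C (pos ` Rs) F ts" and cpl: "complete_der C Rs F ts"
  shows "\<exists>t. chase_tree C Rs F t"
proof -
  define rep where "rep R' = (SOME R. R \<in> Rs \<and> pos R = R')" for R'
  define xsf where "xsf = map (\<lambda>x. (rep (fst x), snd x)) ts"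
  have rep: "rep (fst (ts!i)) \<in> Rs \<and> pos (rep (fst (ts!i))) = fst (ts!i)" if "i < length ts" for i
  proof -
    have "fst (ts!i) \<in> pos ` Rs" using v[unfolded validl_def, rule_format, OF that] by blast
    then have "\<exists>R. R \<in> Rs \<and> pos R = fst (ts!i)" by (metis imageE)
    then show ?thesis unfolding rep_def by (rule someI_ex)
  qed
  have lx: "length xsf = length ts" unfolding xsf_def by simp
  have xsf_nth: "xsf ! i = (rep (fst (ts!i)), snd (ts!i))" if "i < length ts" for i
    using that unfolding xsf_def by simp
  have mpt: "map pt xsf = ts"
    by (rule nth_equalityI) (auto simp: lx xsf_nth pt_def rep)
  define L where "L d = chl C F (root_lab C F) (take d xsf)" for d
  have Lh: "hist (L d) = take d ts" for d
    using chl_props[of C F "root_lab C F" "take d xsf"] mpt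
    by (simp add: L_def root_lab_def take_map[symmetric])
  have LM: "MBT (L d) = {}" for d
    using chl_props[of C F "root_lab C F" "take d xsf"] by (simp add: L_def root_lab_def)
  have LI: "IN (L d) = state C F (take d ts)" for d
  proof (cases "take d xsf = []")
    case True
    then have "take d ts = []" using lx by (metis length_0_conv length_take)
    then show ?thesis using True by (simp only: L_def root_lab_def True chl_Nil nlab.simps)
  next
    case False
    then show ?thesis using chl_props[of C F "root_lab C F" "take d xsf"] Lh[of d]
      by (simp add: L_def root_lab_def)
  qed
  define U where "U d = unsound (L d)" for d
  define d0 where "d0 = (if \<exists>d\<le>length ts. U d then LEAST d. U d else length ts)"
  have d0le: "d0 \<le> length ts"
  proof (cases "\<exists>d\<le>length ts. U d")
    case True
    then obtain d where "d \<le> length ts" "U d" by blast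
    then show ?thesis unfolding d0_def using Least_le[of U d] True by simp
  next
    case False then show ?thesis unfolding d0_def by auto
  qed
  have notU: "\<not> U d" if "d < d0" for d
  proof (cases "\<exists>d\<le>length ts. U d")
    case True then show ?thesis using that not_less_Least[of d U] unfolding d0_def by simp
  next
    case False then show ?thesis using that d0le unfolding d0_def by auto
  qed
  have endU: "U d0 \<or> (d0 = length ts \<and> (\<forall>d\<le>length ts. \<not> U d))"
  proof (cases "\<exists>d\<le>length ts. U d")
    case True then show ?thesis using LeastI_ex[of U] unfolding d0_def by auto
  next
    case False then show ?thesis unfolding d0_def by auto
  qed
  define xs where "xs = take d0 xsf"
  define t where "t = mk xs"
  have lxs: "length xs = d0" unfolding xs_def using d0le lx by simp
  have labc: "lab_at C F t (replicate d 0) = L d" if "d \<le> d0" for d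
    unfolding lab_at_def t_def L_def using mk_chain[of d xs C F "root_lab C F"] that lxs
    by (simp add: xs_def min_def)
  have wf: "wf_dtree C Rs F t"
    unfolding wf_dtree_def
  proof (intro allI impI)
    fix a R \<pi> cs
    assume st: "subt t a = Some (Inner R \<pi> cs)"
    from mk_subt[OF st[unfolded t_def]] obtain d where
      d: "d \<le> length xs" "a = replicate d 0" "Inner R \<pi> cs = mk (drop d xs)" by auto
    have "drop d xs \<noteq> []" using d(3) by auto
    then have dl: "d < d0" using lxs by simp
    then have dts: "d < length ts" using d0le by simp
    have "drop d xs = xs ! d # drop (Suc d) xs" using dl lxs by (simp add: Cons_nth_drop_Suc)
    moreover have "xs ! d = (rep (fst (ts!d)), snd (ts!d))"
      using dl xsf_nth[OF dts] unfolding xs_def by simp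
    ultimately have R: "R = rep (fst (ts!d))" "\<pi> = snd (ts!d)"
      "cs = mk (drop (Suc d) xs) # replicate (length (bneg R)) Leaf" using d(3) by auto
    have pR: "(pos R, \<pi>) = ts ! d" using rep[OF dts] R by simp
    have la: "lab_at C F t a = L d" using labc dl d(2) by simp
    have vd: "fst (ts!d) \<in> pos ` Rs \<and>
      snd (ts!d) \<in> homs (bpos (fst (ts!d))) (state C F (take d ts)) \<and>
      \<not> cblk C F (take d ts) (ts!d) \<and> \<not> state C F (take (Suc d) ts) \<subseteq> state C F (take d ts)"
      using v[unfolded validl_def, rule_format, OF dts] .
    have "bpos R = bpos (fst (ts!d))" using pR by (metis fst_conv pos_simps(1))
    then show "let l = lab_at C F t a in
        R \<in> Rs \<and> \<pi> \<in> homs (bpos R) (IN l) \<and> \<not> unsound l \<and>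
        \<not> cblk C F (hist l) (pos R, \<pi>) \<and>
        \<not> state C F (hist l @ [(pos R, \<pi>)]) \<subseteq> IN l \<and>
        length cs = Suc (length (bneg R))"
      using vd la Lh LI notU[OF dl] R rep[OF dts] pR dts
      by (simp add: U_def take_Suc_conv_app_nth)
  qed
  have leaves_ok: "unsound_br C F t a \<or> unprovable_br C Rs F t a \<or> complete_br C Rs F t a"
    if a: "a \<in> leaves t" for a
  proof -
    have sa: "subt t a = Some Leaf" using a unfolding leaves_def by simp
    from mk_subt[OF sa[unfolded t_def]] show ?thesis
    proof
      assume "\<exists>d\<le>length xs. a = replicate d 0 \<and> Leaf = mk (drop d xs)"
      then obtain d where d: "d \<le> length xs" "a = replicate d 0" "Leaf = mk (drop d xs)" by blast
      have "drop d xs = []"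
      proof (rule ccontr)
        assume "drop d xs \<noteq> []"
        then obtain y ys where "drop d xs = y # ys" by (cases "drop d xs") auto
        then show False using d(3) by (cases y) auto
      qed
      then have dd: "d = d0" using d(1) lxs by simp
      from endU show ?thesis
      proof
        assume "U d0"
        then have "unsound (lab_at C F t (take d0 a))" using labc[of d0] dd d(2) by (simp add: U_def)
        then show ?thesis unfolding unsound_br_def using dd d(2) by auto
      next
        assume e: "d0 = length ts \<and> (\<forall>d\<le>length ts. \<not> U d)"
        have "\<not> unsound_br C F t a"
          unfolding unsound_br_def
        proof
          assume "\<exists>j\<le>length a. unsound (lab_at C F t (take j a))"
          then obtain j where j: "j \<le> d0" "unsound (lab_at C F t (take j a))" using d(2) dd by auto
          then have "unsound (L j)" using labc[OF j(1)] d(2) dd by (simp add: min_def)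
          then show False using e j(1) by (simp add: U_def)
        qed
        moreover have "hist (lab_at C F t a) = ts" using labc[of d0] dd d(2) Lh[of d0] e by simp
        ultimately show ?thesis unfolding complete_br_def using cpl by simp
      qed
    next
      assume "\<exists>d<length xs. \<exists>i<length (bneg (fst (xs!d))). a = replicate d 0 @ [Suc i] \<and> Leaf = Leaf"
      then obtain d i where di: "d < length xs" "i < length (bneg (fst (xs!d)))"
        "a = replicate d 0 @ [Suc i]" by blast
      have "lab_at C F t a = child_lab C F (chl C F (root_lab C F) (take d xs)) (fst (xs ! d)) (snd (xs ! d)) (Suc i)"
        unfolding lab_at_def t_def using mk_neg[OF di(1,2)] di(3) by simp
      then obtain m where m: "m \<in> MBT (lab_at C F t a)" by auto
      show ?thesis
      proof (cases "complete_br C Rs F t a")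
        case True then show ?thesis by simp
      next
        case False
        have "\<not> (\<exists>b\<in>leaves t. length a \<le> length b \<and> take (length a) b = take (length a) a \<and>
           complete_br C Rs F t b \<and> stable_br C Rs F t b)"
        proof
          assume "\<exists>b\<in>leaves t. length a \<le> length b \<and> take (length a) b = take (length a) a \<and>
           complete_br C Rs F t b \<and> stable_br C Rs F t b"
          then obtain b where b: "b \<in> leaves t" "take (length a) b = a" "complete_br C Rs F t b" by auto
          have "b = a @ drop (length a) b" using b(2) by (metis append_take_drop_id)
          then have "subt t (a @ drop (length a) b) = Some Leaf" using b(1) unfolding leaves_def by simp
          then have "drop (length a) b = []" using sa by (auto simp: subt_append dest: subt_Leaf)
          then have "b = a" using \<open>b = a @ drop (length a) b\<close> by simp
          then show False using b(3) False by simp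
        qed
        then have "unprovable_br C Rs F t a" unfolding unprovable_br_def
          using m by (intro exI[of _ "length a"]) auto
        then show ?thesis by simp
      qed
    qed
  qed
  show ?thesis unfolding chase_tree_def using wf leaves_ok by blast
qed

theorem mainTheorem13:
  fixes Rs :: "('p, 'c, 'v::infinite) nme_rule set"
    and C :: "('p, 'c, 'v) criterion"
  assumes "finite Rs"
    and "\<forall>R\<in>Rs. nme_rule R"
    and "chase_criterion C"
    and "local_crit C"
    and "C_finite C (pos ` Rs)"
  shows "C_stable_finite C Rs"
  unfolding C_stable_finite_def
proof (intro allI impI)
  fix F :: "('p, 'c, 'v) atomset"
  assume fF: "finite F"
  let ?h = "hrun C (pos ` Rs) F"
  have hv: "validl C (pos ` Rs) F (?h k) \<and>
    distinct (SOME cs. distinct cs \<and> set cs = cands (pos ` Rs) (state C F (?h k))) \<and>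
    set (SOME cs. distinct cs \<and> set cs = cands (pos ` Rs) (state C F (?h k))) =
      cands (pos ` Rs) (state C F (?h k))" for k
    using hrun_valid[OF assms(4) fF assms(2) assms(1)] .
  have "chase_run C (pos ` Rs) F ?h"
    unfolding chase_run_def
  proof (intro conjI allI)
    show "?h 0 = []" by simp
  next
    fix k
    show "\<exists>cs. distinct cs \<and> set cs = cands (pos ` Rs) (state C F (?h k)) \<and> ?h (Suc k) = proc C F (?h k) cs"
      using hv[of k] by auto
  qed
  then obtain k where k: "?h (Suc k) = ?h k"
    using assms(5) fF unfolding C_finite_def chase_halts_def by blast
  let ?ts = "?h k"
  have "complete_der C Rs F ?ts"
    unfolding complete_der_def
  proof (intro ballI impI)
    fix R \<pi> assume R: "R \<in> Rs" and p: "\<pi> \<in> homs (bpos R) (state C F ?ts)"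
      and nb: "\<not> cblk C F ?ts (pos R, \<pi>)"
    have "(pos R, \<pi>) \<in> cands (pos ` Rs) (state C F ?ts)"
      unfolding cands_def using R p by auto
    then have "(pos R, \<pi>) \<in> set (SOME cs. distinct cs \<and> set cs = cands (pos ` Rs) (state C F ?ts))"
      using hv[of k] by simp
    moreover have "proc C F ?ts (SOME cs. distinct cs \<and> set cs = cands (pos ` Rs) (state C F ?ts)) = ?ts"
      using k by simp
    ultimately show "state C F (?ts @ [(pos R, \<pi>)]) \<subseteq> state C F ?ts"
      using proc_fixed nb by blast
  qed
  then show "\<exists>t. chase_tree C Rs F t" using tree_exists hv[of k] by blast
qed

end
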